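(* Under the setting of the context, define for $(i,y)\in E\times\mathbb R^d$ $$b^{(m)}(i,y)=\sum_{u\in\mathcal V}p(i,y,u)\bigl[(v-g)(i,y+u/m)-(v-g)(i,y)\bigr],$$ and for $n\ge1$ $$Y_n=J_n+v(\xi_n,S_n/m)-\mathbb E\bigl[J_n+v(\xi_n,S_n/m)\mid\mathcal F_{n-1}\bigr].$$ Then for every $n\ge0$, $$S_{n+1}+v(\xi_{n+1},S_{n+1}/m)=S_n+v(\xi_n,S_n/m)+b^{(m)}(\xi_n,S_n/m)+Y_{n+1}.$$ In particular $(S_n+v(\xi_n,S_n/m))_{n\ge0}$ is a semimartingale. Moreover there exists a constant $C$, depending only on $E$, $P$ and $p$, such that $|b^{(m)}(i,y)|\le C/m$ for all $m\ge1$, $i\in E$, $y\in\mathbb R^d$.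
   Context: Let $d\ge1$, $(e_1,\dots,e_d)$ the canonical basis, $\mathcal V=\{\pm e_1,\dots,\pm e_d\}$. Let $E$ be a finite set and $P$ an irreducible and aperiodic stochastic matrix on $E$ with unique invariant probability $\mu$. For $k\in E$, $y\in\mathbb R^d$, $p(k,y,\cdot)$ is a probability on $\mathcal V$, with $y\mapsto p(k,y,u)$ twice continuously differentiable with bounded derivatives. Let $g(k,y)=\sum_u u\,p(k,y,u)$, assumed to satisfy $\sum_k\mu(k)g(k,y)=0$ for all $y$, and $v(i,y)=\sum_{n\ge0}\sum_{j\in E}P^n(i,j)g(j,y)$. For an integer $m\ge1$, $(\xi_n,J_n)_{n\ge0}$ is a process with $J_n\in\mathcal V$ for $n\ge1$, $S_0=0$, $S_{n+1}=S_n+J_{n+1}$, and with $\mathcal F_n=\sigma(\xi_0,\dots,\xi_n,J_0,\dots,J_n)$: $\mathbb P(\xi_{n+1}=k,J_{n+1}=u\mid\mathcal F_n)=P(\xi_n,k)p(\xi_n,S_n/m,u)$ for $k\in E$, $u\in\mathcal V$. *)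

theory Defs
  imports "HOL-Probability.Probability"
begin

definition Vset :: "(real ^ 'd) set" where
  "Vset = {axis i 1 | i. True} \<union> {axis i (-1) | i. True}"

fun mpow :: "('e::finite \<Rightarrow> 'e \<Rightarrow> real) \<Rightarrow> nat \<Rightarrow> 'e \<Rightarrow> 'e \<Rightarrow> real" where
  "mpow P 0 i j = (if i = j then 1 else 0)"
| "mpow P (Suc n) i j = (\<Sum>k\<in>UNIV. mpow P n i k * P k j)"

definition stochastic :: "('e::finite \<Rightarrow> 'e \<Rightarrow> real) \<Rightarrow> bool" where
  "stochastic P \<longleftrightarrow> (\<forall>i j. 0 \<le> P i j) \<and> (\<forall>i. (\<Sum>j\<in>UNIV. P i j) = 1)"

definition irreducible_mat :: "('e::finite \<Rightarrow> 'e \<Rightarrow> real) \<Rightarrow> bool" where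
  "irreducible_mat P \<longleftrightarrow> (\<forall>i j. \<exists>n. 0 < mpow P n i j)"

definition aperiodic_mat :: "('e::finite \<Rightarrow> 'e \<Rightarrow> real) \<Rightarrow> bool" where
  "aperiodic_mat P \<longleftrightarrow> (\<forall>i. Gcd {n. 0 < n \<and> 0 < mpow P n i i} = (1::nat))"

definition invariant_prob :: "('e::finite \<Rightarrow> 'e \<Rightarrow> real) \<Rightarrow> ('e \<Rightarrow> real) \<Rightarrow> bool" where
  "invariant_prob P \<mu> \<longleftrightarrow> (\<forall>i. 0 \<le> \<mu> i) \<and> (\<Sum>i\<in>UNIV. \<mu> i) = 1 \<and>
     (\<forall>j. (\<Sum>i\<in>UNIV. \<mu> i * P i j) = \<mu> j)"

definition gdrift :: "('e \<Rightarrow> real ^ 'd \<Rightarrow> real ^ 'd \<Rightarrow> real) \<Rightarrow> 'e \<Rightarrow> real ^ 'd \<Rightarrow> real ^ 'd" where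
  "gdrift p k y = (\<Sum>u\<in>Vset. p k y u *\<^sub>R u)"

definition vcorr :: "('e::finite \<Rightarrow> 'e \<Rightarrow> real) \<Rightarrow> ('e \<Rightarrow> real ^ 'd \<Rightarrow> real ^ 'd \<Rightarrow> real)
    \<Rightarrow> 'e \<Rightarrow> real ^ 'd \<Rightarrow> real ^ 'd" where
  "vcorr P p i y = (\<Sum>n. \<Sum>j\<in>UNIV. mpow P n i j *\<^sub>R gdrift p j y)"

definition bdrift :: "('e::finite \<Rightarrow> 'e \<Rightarrow> real) \<Rightarrow> ('e \<Rightarrow> real ^ 'd \<Rightarrow> real ^ 'd \<Rightarrow> real)
    \<Rightarrow> nat \<Rightarrow> 'e \<Rightarrow> real ^ 'd \<Rightarrow> real ^ 'd" where
  "bdrift P p m i y = (\<Sum>u\<in>Vset. p i y u *\<^sub>R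
      ((vcorr P p i (y + u /\<^sub>R real m) - gdrift p i (y + u /\<^sub>R real m))
       - (vcorr P p i y - gdrift p i y)))"

fun Spos :: "(nat \<Rightarrow> 'a \<Rightarrow> real ^ 'd) \<Rightarrow> nat \<Rightarrow> 'a \<Rightarrow> real ^ 'd" where
  "Spos J 0 x = 0"
| "Spos J (Suc n) x = Spos J n x + J (Suc n) x"

definition filt :: "'a measure \<Rightarrow> (nat \<Rightarrow> 'a \<Rightarrow> 'e) \<Rightarrow> (nat \<Rightarrow> 'a \<Rightarrow> real ^ 'd) \<Rightarrow> nat \<Rightarrow> 'a measure" where
  "filt M \<xi> J n = sigma (space M)
     (\<Union>k\<in>{..n}. {\<xi> k -` B \<inter> space M | B. True} \<union> {J k -` B \<inter> space M | B. B \<in> sets borel})"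

definition cond_exp_vec :: "'a measure \<Rightarrow> 'a measure \<Rightarrow> ('a \<Rightarrow> real ^ 'd) \<Rightarrow> 'a \<Rightarrow> real ^ 'd" where
  "cond_exp_vec M F f x = (\<chi> i. real_cond_exp M F (\<lambda>y. f y $ i) x)"

end

theory Submission
  imports Defs
begin


lemma mpow_add:
  "mpow P (a + b) i j = (\<Sum>k\<in>UNIV. mpow P a i k * mpow P b k j)"
proof (induction b arbitrary: j)
  case 0
  show ?case by (simp add: if_distrib[of "\<lambda>x. _ * x"] cong: if_cong)
next
  case (Suc b)
  have "mpow P (a + Suc b) i j = (\<Sum>l\<in>UNIV. mpow P (a+b) i l * P l j)" by simp
  also have "\<dots> = (\<Sum>l\<in>UNIV. (\<Sum>k\<in>UNIV. mpow P a i k * mpow P b k l) * P l j)"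
    using Suc by simp
  also have "\<dots> = (\<Sum>l\<in>UNIV. \<Sum>k\<in>UNIV. mpow P a i k * mpow P b k l * P l j)"
    by (simp add: sum_distrib_right)
  also have "\<dots> = (\<Sum>k\<in>UNIV. \<Sum>l\<in>UNIV. mpow P a i k * mpow P b k l * P l j)"
    by (rule sum.swap)
  also have "\<dots> = (\<Sum>k\<in>UNIV. mpow P a i k * (\<Sum>l\<in>UNIV. mpow P b k l * P l j))"
    by (simp add: sum_distrib_left mult.assoc)
  finally show ?case by simp
qed

lemma mpow_1: "mpow P 1 i j = P i j"
  by (simp add: if_distrib[of "\<lambda>x. x * _"] cong: if_cong)

lemma mpow_Suc_left: "mpow P (Suc n) i j = (\<Sum>k\<in>UNIV. P i k * mpow P n k j)"
  unfolding Suc_eq_plus1_left mpow_add mpow_1 ..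

lemma mpow_nonneg: "stochastic P \<Longrightarrow> 0 \<le> mpow P n i j"
  by (induction n arbitrary: j) (auto simp: stochastic_def intro!: sum_nonneg)

lemma mpow_rowsum: "stochastic P \<Longrightarrow> (\<Sum>j\<in>UNIV. mpow P n i j) = 1"
proof (induction n)
  case 0
  then show ?case by simp
next
  case (Suc n)
  have "(\<Sum>j\<in>UNIV. mpow P (Suc n) i j) = (\<Sum>j\<in>UNIV. \<Sum>k\<in>UNIV. mpow P n i k * P k j)"
    by simp
  also have "\<dots> = (\<Sum>k\<in>UNIV. \<Sum>j\<in>UNIV. mpow P n i k * P k j)" by (rule sum.swap)
  also have "\<dots> = (\<Sum>k\<in>UNIV. mpow P n i k * (\<Sum>j\<in>UNIV. P k j))"
    by (simp add: sum_distrib_left)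
  also have "\<dots> = 1" using Suc by (simp add: stochastic_def)
  finally show ?case .
qed

lemma mu_inv_pow:
  assumes "invariant_prob P \<mu>"
  shows "(\<Sum>i\<in>UNIV. \<mu> i * mpow P n i j) = \<mu> j"
proof (induction n arbitrary: j)
  case 0
  then show ?case by (simp add: if_distrib[of "\<lambda>x. _ * x"] cong: if_cong)
next
  case (Suc n)
  have "(\<Sum>i\<in>UNIV. \<mu> i * mpow P (Suc n) i j) = (\<Sum>i\<in>UNIV. \<Sum>k\<in>UNIV. \<mu> i * mpow P n i k * P k j)"
    by (simp add: sum_distrib_left mult.assoc)
  also have "\<dots> = (\<Sum>k\<in>UNIV. \<Sum>i\<in>UNIV. \<mu> i * mpow P n i k * P k j)" by (rule sum.swap)
  also have "\<dots> = (\<Sum>k\<in>UNIV. (\<Sum>i\<in>UNIV. \<mu> i * mpow P n i k) * P k j)"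
    by (simp add: sum_distrib_right)
  also have "\<dots> = \<mu> j" using Suc assms by (simp add: invariant_prob_def)
  finally show ?case .
qed

lemma mpow_add_ge:
  assumes "stochastic P"
  shows "mpow P a i k * mpow P b k j \<le> mpow P (a + b) i j"
  unfolding mpow_add
  by (rule member_le_sum[where f="\<lambda>k. mpow P a i k * mpow P b k j"])
     (auto intro: mult_nonneg_nonneg mpow_nonneg[OF assms])

section \<open>Numerical semigroups\<close>

lemma semi_mult:
  assumes add: "\<forall>a\<in>S. \<forall>b\<in>S. a + b \<in> (S::nat set)"
    and s: "s \<in> S"
  shows "Suc k * s \<in> S"
proof (induction k)
  case 0
  show ?case using s by simp
next
  case (Suc k)
  have "s + Suc k * s \<in> S" using add s Suc.IH by blast
  then show ?case by simp
qed

lemma semi_mult0: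
  assumes add: "\<forall>a\<in>S. \<forall>b\<in>S. a + b \<in> (S::nat set)"
    and s: "s \<in> S \<or> s = 0"
  shows "k * s \<in> S \<or> k * s = 0"
proof (cases "k = 0 \<or> s = 0")
  case True then show ?thesis by auto
next
  case False
  then obtain k' where k: "k = Suc k'" by (cases k) auto
  have "s \<in> S" using s False by simp
  then have "Suc k' * s \<in> S" by (rule semi_mult[OF add])
  then show ?thesis using k by simp
qed

lemma semi_diff:
  assumes add: "\<forall>a\<in>S. \<forall>b\<in>S. a + b \<in> (S::nat set)"
    and pos: "\<And>a. a \<in> S \<Longrightarrow> 0 < a"
    and F: "finite F" "F \<noteq> {}" "F \<subseteq> S"
  shows "\<exists>x y. x \<in> S \<and> (y \<in> S \<or> y = 0) \<and> x = y + Gcd F"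
  using F
proof (induction F rule: finite_ne_induct)
  case (singleton a)
  then have "a \<in> S" by simp
  then show ?case by (intro exI[of _ a] exI[of _ 0]) simp
next
  case (insert s F)
  have FS: "F \<subseteq> S" and sS: "s \<in> S" using insert.prems by auto
  obtain x y where xy: "x \<in> S" "y \<in> S \<or> y = 0" "x = y + Gcd F" using insert.IH[OF FS] by blast
  have d0: "Gcd F \<noteq> 0"
  proof
    assume "Gcd F = 0"
    then have "F \<subseteq> {0}" by simp
    moreover obtain f where "f \<in> F" using insert.hyps(2) by blast
    ultimately have "0 \<in> S" using FS by auto
    then show False using pos by blast
  qed
  obtain \<alpha> \<beta> where ab: "Gcd F * \<alpha> = s * \<beta> + gcd (Gcd F) s"
    using bezout_nat[OF d0, of s] by auto
  have g0: "gcd (Gcd F) s > 0" using d0 by simp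
  have a0: "\<alpha> \<noteq> 0"
  proof
    assume "\<alpha> = 0"
    with ab have "s * \<beta> + gcd (Gcd F) s = 0" by simp
    with g0 show False by simp
  qed
  then obtain \<alpha>' where a': "\<alpha> = Suc \<alpha>'" by (cases \<alpha>) auto
  have X: "\<alpha> * x \<in> S" using semi_mult[OF add xy(1)] a' by simp
  have Y1: "\<alpha> * y \<in> S \<or> \<alpha> * y = 0" using semi_mult0[of S y \<alpha>, OF add xy(2)] by simp
  have Y2: "\<beta> * s \<in> S \<or> \<beta> * s = 0" using semi_mult0[of S s \<beta>, OF add] sS by simp
  have Y: "\<alpha> * y + \<beta> * s \<in> S \<or> \<alpha> * y + \<beta> * s = 0"
  proof (cases "\<alpha> * y = 0")
    case True
    then show ?thesis using Y2 by (metis add_0_left)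
  next
    case False
    then have ay: "\<alpha> * y \<in> S" using Y1 by simp
    show ?thesis
    proof (cases "\<beta> * s = 0")
      case True
      then show ?thesis using ay by (metis add_0_right)
    next
      case False
      then have "\<beta> * s \<in> S" using Y2 by simp
      then show ?thesis using add ay by blast
    qed
  qed
  have "\<alpha> * x = \<alpha> * y + Gcd F * \<alpha>" using xy(3) by (simp add: algebra_simps)
  also have "\<dots> = \<alpha> * y + (s * \<beta> + gcd (Gcd F) s)" using ab by simp
  also have "\<dots> = (\<alpha> * y + \<beta> * s) + Gcd (insert s F)"
    by (simp add: gcd.commute[of s "Gcd F"] mult.commute[of s \<beta>])
  finally have eq: "\<alpha> * x = (\<alpha> * y + \<beta> * s) + Gcd (insert s F)" .
  show ?case
    by (rule exI[of _ "\<alpha> * x"], rule exI[of _ "\<alpha> * y + \<beta> * s"]) (intro conjI X Y eq)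
qed

lemma semi_gcd_finite:
  assumes pos: "\<And>a. a \<in> S \<Longrightarrow> 0 < (a::nat)"
    and g: "Gcd S = 1"
  shows "\<exists>F. finite F \<and> F \<noteq> {} \<and> F \<subseteq> S \<and> Gcd F = 1"
proof -
  let ?T = "{Gcd F | F. finite F \<and> F \<noteq> {} \<and> F \<subseteq> S}"
  have "S \<noteq> {}" using g by auto
  then obtain a where "a \<in> S" by auto
  then have "Gcd {a} \<in> ?T" by blast
  then have ne: "?T \<noteq> {}" by blast
  define d where "d = (LEAST t. t \<in> ?T)"
  have "\<exists>t. t \<in> ?T" using ne by blast
  then have "d \<in> ?T" unfolding d_def by (rule LeastI_ex)
  then obtain F where F: "finite F" "F \<noteq> {}" "F \<subseteq> S" "Gcd F = d" by blast
  have dmin: "\<And>t. t \<in> ?T \<Longrightarrow> d \<le> t" unfolding d_def by (rule Least_le)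
  have d0: "d \<noteq> 0"
  proof
    assume "d = 0"
    then have "F \<subseteq> {0}" using F(4) by simp
    with F(2) have "0 \<in> F" by blast
    then show False using F(3) pos by force
  qed
  have "d dvd s" if s: "s \<in> S" for s
  proof -
    have "Gcd (insert s F) \<in> ?T" using F s by blast
    then have "d \<le> Gcd (insert s F)" by (rule dmin)
    moreover have "Gcd (insert s F) dvd d" using F by simp
    ultimately have e: "Gcd (insert s F) = d" using d0 by (simp add: dvd_imp_le le_antisym)
    have "gcd s d dvd s" by simp
    moreover have "gcd s d = d" using e F(4) by simp
    ultimately show ?thesis by simp
  qed
  then have "d dvd Gcd S" by (simp add: Gcd_greatest)
  then have "d = 1" using g by simp
  then show ?thesis using F by blast
qed

lemma semi_large:
  assumes add: "\<forall>a\<in>S. \<forall>b\<in>S. a + b \<in> (S::nat set)"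
    and pos: "\<And>a. a \<in> S \<Longrightarrow> 0 < a"
    and g: "Gcd S = 1"
  shows "\<exists>n0. \<forall>n\<ge>n0. n \<in> S"
proof -
  obtain F where F: "finite F" "F \<noteq> {}" "F \<subseteq> S" "Gcd F = 1"
    using semi_gcd_finite[OF pos g] by blast
  obtain x y where xy: "x \<in> S" "y \<in> S \<or> y = 0" "x = y + 1"
    using semi_diff[OF add pos F(1-3)] F(4) by auto
  show ?thesis
  proof (cases "y = 0")
    case True
    then have "1 \<in> S" using xy by simp
    have "\<forall>n\<ge>1. n \<in> S"
    proof (intro allI impI)
      fix n :: nat assume "1 \<le> n"
      then obtain k where "n = Suc k" by (cases n) auto
      then show "n \<in> S" using semi_mult[OF add \<open>1 \<in> S\<close>, of k] by simp
    qed
    then show ?thesis by blast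
  next
    case False
    then have yS: "y \<in> S" using xy by auto
    have "n \<in> S" if n: "n \<ge> y * y" for n
    proof -
      define q where "q = n div y"
      define r where "r = n mod y"
      have nq: "n = q * y + r" unfolding q_def r_def by simp
      have ry: "r < y" unfolding r_def using False by simp
      have "y * y div y \<le> n div y" using n by (rule div_le_mono)
      then have qy: "q \<ge> y" unfolding q_def using False by simp
      have ne: "n = (q - r) * y + r * x" using nq xy(3) ry qy
        by (simp add: algebra_simps diff_mult_distrib)
      have A1: "(q - r) * y \<in> S"
      proof -
        have "Suc (q - r - 1) * y \<in> S" by (rule semi_mult[OF add yS])
        moreover have "Suc (q - r - 1) = q - r" using ry qy by simp
        ultimately show ?thesis by metis
      qed
      have A2: "r * x \<in> S \<or> r * x = 0" using semi_mult0[of S x r, OF add] xy(1) by simp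
      show ?thesis
      proof (cases "r * x = 0")
        case True
        then show ?thesis using ne A1 by (metis add_0_right)
      next
        case False
        then have "r * x \<in> S" using A2 by simp
        then have "(q - r) * y + r * x \<in> S" using add A1 by blast
        then show ?thesis using ne by simp
      qed
    qed
    then show ?thesis by blast
  qed
qed



lemma primitive:
  fixes P :: "'e::finite \<Rightarrow> 'e \<Rightarrow> real"
  assumes st: "stochastic P" and irr: "irreducible_mat P" and ap: "aperiodic_mat P"
  shows "\<exists>N>0. \<forall>i j. 0 < mpow P N i j"
proof -
  have "\<exists>n0. \<forall>n\<ge>n0. n \<in> {n. 0 < n \<and> 0 < mpow P n i i}" for i
  proof (rule semi_large)
    show "\<forall>a\<in>{n. 0 < n \<and> 0 < mpow P n i i}. \<forall>b\<in>{n. 0 < n \<and> 0 < mpow P n i i}. a + b \<in> {n. 0 < n \<and> 0 < mpow P n i i}"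
    proof (intro ballI)
    fix a b assume "a \<in> {n. 0 < n \<and> 0 < mpow P n i i}" "b \<in> {n. 0 < n \<and> 0 < mpow P n i i}"
    then have "0 < mpow P a i i * mpow P b i i" "0 < a + b" by auto
    then show "a + b \<in> {n. 0 < n \<and> 0 < mpow P n i i}"
      using mpow_add_ge[OF st, of a i i b i] by auto
    qed
  next
    show "Gcd {n. 0 < n \<and> 0 < mpow P n i i} = 1" using ap by (simp add: aperiodic_mat_def)
  qed auto
  then have "\<forall>i. \<exists>n0. \<forall>n\<ge>n0. 0 < mpow P n i i" by blast
  from choice[OF this] obtain n0 where n0': "\<forall>i. \<forall>n\<ge>n0 i. 0 < mpow P n i i" by blast
  then have n0: "\<And>i n. n \<ge> n0 i \<Longrightarrow> 0 < mpow P n i i" by blast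
  have "\<forall>ij. \<exists>n. 0 < mpow P n (fst ij) (snd ij)" using irr unfolding irreducible_mat_def by blast
  from choice[OF this] obtain r' where r': "\<forall>ij. 0 < mpow P (r' ij) (fst ij) (snd ij)" by blast
  define r where "r i j = r' (i, j)" for i j
  have r: "\<And>i j. 0 < mpow P (r i j) i j" unfolding r_def using r' by (metis fst_conv snd_conv)
  define N where "N = (\<Sum>i\<in>UNIV. n0 i) + (\<Sum>i\<in>UNIV. \<Sum>j\<in>UNIV. r i j) + 1"
  have "0 < mpow P N i j" for i j
  proof -
    have "n0 i \<le> (\<Sum>i\<in>UNIV. n0 i)" by (rule member_le_sum) auto
    moreover have "r i j \<le> (\<Sum>j\<in>UNIV. r i j)" by (rule member_le_sum) auto
    moreover have "(\<Sum>j\<in>UNIV. r i j) \<le> (\<Sum>i\<in>UNIV. \<Sum>j\<in>UNIV. r i j)"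
      by (rule member_le_sum[where f="\<lambda>i. \<Sum>j\<in>UNIV. r i j"]) auto
    ultimately have le: "n0 i \<le> N - r i j" "N = (N - r i j) + r i j" unfolding N_def by auto
    have "0 < mpow P (N - r i j) i i * mpow P (r i j) i j" using n0[OF le(1)] r by simp
    also have "\<dots> \<le> mpow P N i j" using mpow_add_ge[OF st, of "N - r i j" i i "r i j" j] le(2) by simp
    finally show ?thesis .
  qed
  moreover have "N > 0" unfolding N_def by simp
  ultimately show ?thesis by blast
qed

definition app :: "('e::finite \<Rightarrow> 'e \<Rightarrow> real) \<Rightarrow> ('e \<Rightarrow> real) \<Rightarrow> 'e \<Rightarrow> real" where
  "app A f i = (\<Sum>j\<in>UNIV. A i j * f j)"

definition osc :: "('e::finite \<Rightarrow> real) \<Rightarrow> real" where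
  "osc f = Max (range f) - Min (range f)"

lemma max_ge: "f i \<le> Max (range (f::'e::finite \<Rightarrow> real))" by simp
lemma min_le: "Min (range (f::'e::finite \<Rightarrow> real)) \<le> f i" by simp

lemma weighted_bounds:
  fixes w f :: "'e::finite \<Rightarrow> real"
  assumes "\<And>j. 0 \<le> w j" "(\<Sum>j\<in>UNIV. w j) = 1"
  shows "Min (range f) \<le> (\<Sum>j\<in>UNIV. w j * f j)" "(\<Sum>j\<in>UNIV. w j * f j) \<le> Max (range f)"
proof -
  have "(\<Sum>j\<in>UNIV. w j * Min (range f)) \<le> (\<Sum>j\<in>UNIV. w j * f j)"
    by (rule sum_mono) (simp add: assms mult_left_mono)
  then show "Min (range f) \<le> (\<Sum>j\<in>UNIV. w j * f j)" by (simp add: sum_distrib_right[symmetric] assms)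
  have "(\<Sum>j\<in>UNIV. w j * f j) \<le> (\<Sum>j\<in>UNIV. w j * Max (range f))"
    by (rule sum_mono) (simp add: assms mult_left_mono)
  then show "(\<Sum>j\<in>UNIV. w j * f j) \<le> Max (range f)" by (simp add: sum_distrib_right[symmetric] assms)
qed

lemma osc_nonneg: "0 \<le> osc (f::'e::finite \<Rightarrow> real)"
  unfolding osc_def using max_ge[of f] min_le[of f] by (metis diff_ge_0_iff_ge order.trans)

lemma osc_le: "(\<And>i i'. f i - f i' \<le> c) \<Longrightarrow> osc (f::'e::finite \<Rightarrow> real) \<le> c"
proof -
  assume h: "\<And>i i'. f i - f i' \<le> c"
  have "Max (range f) \<in> range f" by (rule Max_in) auto
  then obtain i where "Max (range f) = f i" by blast
  moreover have "Min (range f) \<in> range f" by (rule Min_in) auto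
  then obtain i' where "Min (range f) = f i'" by blast
  ultimately show ?thesis unfolding osc_def using h by simp
qed

lemma osc_app_stoch:
  assumes "\<And>i j. 0 \<le> A i j" "\<And>i. (\<Sum>j\<in>UNIV. A i j) = 1"
  shows "osc (app A f) \<le> osc f"
proof (rule osc_le)
  fix i i'
  have "app A f i \<le> Max (range f)" using weighted_bounds(2)[of "A i" f] assms by (simp add: app_def)
  moreover have "Min (range f) \<le> app A f i'" using weighted_bounds(1)[of "A i'" f] assms by (simp add: app_def)
  ultimately show "app A f i - app A f i' \<le> osc f" unfolding osc_def by linarith
qed

lemma doeblin:
  fixes A :: "'e::finite \<Rightarrow> 'e \<Rightarrow> real"
  assumes eps: "\<And>i j. \<epsilon> \<le> A i j" and rs: "\<And>i. (\<Sum>j\<in>UNIV. A i j) = 1"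
  shows "osc (app A f) \<le> (1 - real CARD('e) * \<epsilon>) * osc f"
proof (rule osc_le)
  fix i i'
  let ?\<rho> = "1 - real CARD('e) * \<epsilon>"
  have dec: "app A f k = \<epsilon> * (\<Sum>j\<in>UNIV. f j) + (\<Sum>j\<in>UNIV. (A k j - \<epsilon>) * f j)" for k
    by (simp add: app_def algebra_simps sum_distrib_left sum_subtractf)
  have rsum: "(\<Sum>j\<in>UNIV. A k j - \<epsilon>) = ?\<rho>" for k by (simp add: sum_subtractf rs)
  have nn: "0 \<le> A k j - \<epsilon>" for k j using eps[of k j] by simp
  have "(\<Sum>j\<in>UNIV. (A i j - \<epsilon>) * f j) \<le> (\<Sum>j\<in>UNIV. (A i j - \<epsilon>) * Max (range f))"
    by (rule sum_mono) (rule mult_left_mono[OF max_ge nn])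
  also have "\<dots> = ?\<rho> * Max (range f)" by (simp add: sum_distrib_right[symmetric] rsum)
  finally have 1: "(\<Sum>j\<in>UNIV. (A i j - \<epsilon>) * f j) \<le> ?\<rho> * Max (range f)" .
  have "?\<rho> * Min (range f) = (\<Sum>j\<in>UNIV. (A i' j - \<epsilon>) * Min (range f))"
    by (simp add: sum_distrib_right[symmetric] rsum)
  also have "\<dots> \<le> (\<Sum>j\<in>UNIV. (A i' j - \<epsilon>) * f j)"
    by (rule sum_mono) (rule mult_left_mono[OF min_le nn])
  finally have 2: "?\<rho> * Min (range f) \<le> (\<Sum>j\<in>UNIV. (A i' j - \<epsilon>) * f j)" .
  show "app A f i - app A f i' \<le> ?\<rho> * osc f"
    unfolding dec osc_def using 1 2 by (simp add: right_diff_distrib)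
qed

lemma app_mpow_add:
  "app (mpow P (a + b)) f i = app (mpow P a) (app (mpow P b) f) i"
proof -
  have "app (mpow P (a + b)) f i = (\<Sum>j\<in>UNIV. \<Sum>k\<in>UNIV. mpow P a i k * mpow P b k j * f j)"
    by (simp add: app_def mpow_add sum_distrib_right)
  also have "\<dots> = (\<Sum>k\<in>UNIV. \<Sum>j\<in>UNIV. mpow P a i k * mpow P b k j * f j)"
    by (rule sum.swap)
  also have "\<dots> = app (mpow P a) (app (mpow P b) f) i"
    by (simp add: app_def sum_distrib_left mult.assoc)
  finally show ?thesis .
qed

lemma geometric_decay:
  fixes P :: "'e::finite \<Rightarrow> 'e \<Rightarrow> real"
  assumes st: "stochastic P" and irr: "irreducible_mat P" and ap: "aperiodic_mat P"
    and mu: "invariant_prob P \<mu>"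
  shows "\<exists>K \<sigma>. 0 \<le> K \<and> 0 \<le> \<sigma> \<and> \<sigma> < 1 \<and>
     (\<forall>f B n i. (\<Sum>j\<in>UNIV. \<mu> j * f j) = 0 \<longrightarrow> (\<forall>j. \<bar>f j\<bar> \<le> B) \<longrightarrow>
        \<bar>app (mpow P n) f i\<bar> \<le> K * \<sigma> ^ n * B)"
proof -
  obtain N where N: "\<And>i j. 0 < mpow P N i j" and N0: "N > 0" using primitive[OF st irr ap] by blast
  define Q where "Q = mpow P N"
  define \<epsilon> where "\<epsilon> = Min (range (\<lambda>(i,j). Q i j))"
  have epsQ: "\<epsilon> \<le> Q i j" for i j unfolding \<epsilon>_def by (rule Min_le) auto
  have eps0: "0 < \<epsilon>"
  proof -
    have "\<epsilon> \<in> range (\<lambda>(i,j). Q i j)" unfolding \<epsilon>_def by (rule Min_in) auto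
    then obtain i j where "\<epsilon> = Q i j" by auto
    then show ?thesis using N unfolding Q_def by auto
  qed
  have Qrs: "(\<Sum>j\<in>UNIV. Q i j) = 1" for i unfolding Q_def by (rule mpow_rowsum[OF st])
  define \<rho> where "\<rho> = max (1 - real CARD('e) * \<epsilon>) (1/2)"
  have rho: "0 < \<rho>" "\<rho> < 1"
  proof -
    have "real CARD('e) * \<epsilon> > 0" using eps0 by simp
    then show "\<rho> < 1" unfolding \<rho>_def by simp
  qed (simp add: \<rho>_def)
  have contr: "osc (app Q f) \<le> \<rho> * osc f" for f
  proof -
    have "osc (app Q f) \<le> (1 - real CARD('e) * \<epsilon>) * osc f" by (rule doeblin[OF epsQ Qrs])
    also have "\<dots> \<le> \<rho> * osc f" unfolding \<rho>_def by (rule mult_right_mono) (auto simp: osc_nonneg)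
    finally show ?thesis .
  qed
  have stp: "\<And>n i j. 0 \<le> mpow P n i j" "\<And>n i. (\<Sum>j\<in>UNIV. mpow P n i j) = 1"
    using mpow_nonneg[OF st] mpow_rowsum[OF st] by auto
  have blocks: "osc (app (mpow P (k * N + r)) f) \<le> \<rho> ^ k * osc f" for k r f
  proof (induction k)
    case 0
    then show ?case using osc_app_stoch[of "mpow P r", OF stp] by simp
  next
    case (Suc k)
    have e1: "Suc k * N + r = N + (k * N + r)" by simp
    have e2: "app (mpow P (N + (k * N + r))) f = app Q (app (mpow P (k * N + r)) f)"
      unfolding Q_def by (rule ext) (rule app_mpow_add)
    have "osc (app (mpow P (Suc k * N + r)) f) = osc (app Q (app (mpow P (k * N + r)) f))"
      unfolding e1 e2 ..
    also have "\<dots> \<le> \<rho> * osc (app (mpow P (k * N + r)) f)" by (rule contr)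
    also have "\<dots> \<le> \<rho> * (\<rho> ^ k * osc f)" using Suc rho by (simp add: mult_left_mono)
    finally show ?case by simp
  qed
  define \<sigma> where "\<sigma> = root N \<rho>"
  have sig: "0 < \<sigma>" "\<sigma> < 1" "\<sigma> ^ N = \<rho>" unfolding \<sigma>_def using rho N0
    by (auto simp: real_root_lt_1_iff)
  have powbound: "\<rho> ^ (n div N) \<le> \<sigma> ^ n / \<rho>" for n
  proof -
    have "\<sigma> ^ n = \<sigma> ^ (N * (n div N)) * \<sigma> ^ (n mod N)"
      by (simp add: power_add[symmetric])
    also have "\<sigma> ^ (N * (n div N)) = \<rho> ^ (n div N)" by (simp add: power_mult sig)
    finally have e: "\<sigma> ^ n = \<rho> ^ (n div N) * \<sigma> ^ (n mod N)" .
    have "\<sigma> ^ N \<le> \<sigma> ^ (n mod N)" using sig N0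
      by (intro power_decreasing) (auto simp: less_imp_le)
    then have "\<rho> ^ (n div N) * \<rho> \<le> \<sigma> ^ n" unfolding e using sig rho
      by (intro mult_left_mono) auto
    then show ?thesis using rho by (simp add: field_simps)
  qed
  have main: "\<bar>app (mpow P n) f i\<bar> \<le> (2 / \<rho>) * \<sigma> ^ n * B"
    if f0: "(\<Sum>j\<in>UNIV. \<mu> j * f j) = 0" and fB: "\<forall>j. \<bar>f j\<bar> \<le> B" for f B n i
  proof -
    let ?h = "app (mpow P n) f"
    have B0: "0 \<le> B" using fB by (meson abs_ge_zero order.trans)
    have muw: "\<And>j. 0 \<le> \<mu> j" "(\<Sum>j\<in>UNIV. \<mu> j) = 1" using mu by (auto simp: invariant_prob_def)
    have "(\<Sum>j\<in>UNIV. \<mu> j * ?h j) = (\<Sum>j\<in>UNIV. \<Sum>k\<in>UNIV. \<mu> j * mpow P n j k * f k)"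
      by (simp add: app_def sum_distrib_left mult.assoc)
    also have "\<dots> = (\<Sum>k\<in>UNIV. \<Sum>j\<in>UNIV. \<mu> j * mpow P n j k * f k)" by (rule sum.swap)
    also have "\<dots> = (\<Sum>k\<in>UNIV. (\<Sum>j\<in>UNIV. \<mu> j * mpow P n j k) * f k)"
      by (simp add: sum_distrib_right)
    also have "\<dots> = 0" using f0 by (simp add: mu_inv_pow[OF mu])
    finally have h0: "(\<Sum>j\<in>UNIV. \<mu> j * ?h j) = 0" .
    have "Min (range ?h) \<le> 0" "0 \<le> Max (range ?h)"
      using weighted_bounds[of \<mu> ?h, OF muw] h0 by auto
    then have "\<bar>?h i\<bar> \<le> osc ?h" unfolding osc_def using max_ge[of ?h i] min_le[of ?h i] by linarith
    also have "osc ?h \<le> \<rho> ^ (n div N) * osc f"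
      using blocks[of "n div N" "n mod N" f] by (simp add: mult.commute)
    also have "osc f \<le> 2 * B" by (rule osc_le) (use fB in \<open>smt (verit) abs_le_iff\<close>)
    also have "\<rho> ^ (n div N) * (2 * B) \<le> (\<sigma> ^ n / \<rho>) * (2 * B)"
      by (rule mult_right_mono[OF powbound]) (use B0 in simp)
    finally have "\<bar>?h i\<bar> \<le> (\<sigma> ^ n / \<rho>) * (2 * B)"
      using rho by (simp add: mult_left_mono)
    then show ?thesis by (simp add: field_simps)
  qed
  show ?thesis
    by (rule exI[of _ "2 / \<rho>"], rule exI[of _ \<sigma>]) (use rho sig main in auto)
qed



lemma norm_suminf_geo:
  fixes f :: "nat \<Rightarrow> 'a::banach"
  assumes b: "\<And>n. norm (f n) \<le> c * \<sigma> ^ n" and s: "0 \<le> \<sigma>" "\<sigma> < 1"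
  shows "summable f" "summable (\<lambda>n. norm (f n))" "norm (suminf f) \<le> c / (1 - \<sigma>)"
proof -
  have g: "summable (\<lambda>n. c * \<sigma> ^ n)" using s by (intro summable_mult summable_geometric) simp
  show sn: "summable (\<lambda>n. norm (f n))"
    by (rule summable_comparison_test'[OF g, of 0]) (simp add: b)
  show "summable f"
    by (rule summable_comparison_test'[OF g, of 0]) (simp add: b)
  have "norm (suminf f) \<le> (\<Sum>n. norm (f n))" by (rule summable_norm[OF sn])
  also have "\<dots> \<le> (\<Sum>n. c * \<sigma> ^ n)" by (rule suminf_le[OF b sn g])
  also have "\<dots> = c / (1 - \<sigma>)" using s by (simp add: suminf_mult suminf_geometric)
  finally show "norm (suminf f) \<le> c / (1 - \<sigma>)" .
qed


lemma Vset_eq: "(Vset :: (real^'d) set) = range (\<lambda>i. axis i 1) \<union> range (\<lambda>i. axis i (-1))"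
  unfolding Vset_def by auto

lemma finite_Vset: "finite (Vset :: (real^'d) set)"
  unfolding Vset_eq by simp

lemma norm_Vset: "u \<in> Vset \<Longrightarrow> norm (u :: real^'d) = 1"
proof -
  assume "u \<in> Vset"
  then obtain i where "u = axis i 1 \<or> u = axis i (-1)" unfolding Vset_eq by auto
  moreover have "axis i (-1::real) = - axis i 1" by (simp add: vec_eq_iff axis_def)
  ultimately show ?thesis by auto
qed

context
  fixes P :: "'e::finite \<Rightarrow> 'e \<Rightarrow> real"
    and \<mu> :: "'e \<Rightarrow> real"
    and p :: "'e \<Rightarrow> real ^ 'd \<Rightarrow> real ^ 'd \<Rightarrow> real"
    and Dp :: "'e \<Rightarrow> real ^ 'd \<Rightarrow> real ^ 'd \<Rightarrow> ((real ^ 'd) \<Rightarrow>\<^sub>L real)"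
  assumes P_stoch: "stochastic P"
    and P_irr: "irreducible_mat P"
    and P_aper: "aperiodic_mat P"
    and mu_inv: "invariant_prob P \<mu>"
    and p_nonneg: "\<And>k y u. u \<in> Vset \<Longrightarrow> 0 \<le> p k y u"
    and p_sum: "\<And>k y. (\<Sum>u\<in>Vset. p k y u) = 1"
    and p_D1: "\<And>k u y. u \<in> Vset \<Longrightarrow>
                 ((\<lambda>z. p k z u) has_derivative blinfun_apply (Dp k u y)) (at y)"
    and p_D1_bdd: "\<And>k u. u \<in> Vset \<Longrightarrow> bounded (range (Dp k u))"
    and centered: "\<And>y. (\<Sum>k\<in>UNIV. \<mu> k *\<^sub>R gdrift p k y) = 0"
begin

lemma gdrift_bound: "norm (gdrift p k y) \<le> 1"
proof -
  have "norm (gdrift p k y) \<le> (\<Sum>u\<in>Vset. norm (p k y u *\<^sub>R u))"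
    unfolding gdrift_def by (rule norm_sum)
  also have "\<dots> = (\<Sum>u\<in>Vset. p k y u)"
    by (rule sum.cong) (auto simp: norm_Vset p_nonneg)
  finally show ?thesis by (simp add: p_sum)
qed

lemma p_lip: "\<exists>L\<ge>0. \<forall>k u y y'. u \<in> Vset \<longrightarrow> \<bar>p k y u - p k y' u\<bar> \<le> L * norm (y - y')"
proof -
  have "bounded (\<Union>k\<in>UNIV. \<Union>u\<in>Vset. range (Dp k u))"
    by (intro bounded_UN ballI p_D1_bdd) (simp_all add: finite_Vset)
  then obtain L0 where L0: "\<forall>z\<in>(\<Union>k\<in>UNIV. \<Union>u\<in>Vset. range (Dp k u)). norm z \<le> L0"
    unfolding bounded_iff ..
  define L where "L = max L0 0"
  have BL: "norm (Dp k u y) \<le> L" if "u \<in> Vset" for k u y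
  proof -
    have "Dp k u y \<in> (\<Union>k\<in>UNIV. \<Union>u\<in>Vset. range (Dp k u))" using that by blast
    then have "norm (Dp k u y) \<le> L0" by (rule bspec[OF L0])
    then show ?thesis unfolding L_def by simp
  qed
  have L0': "0 \<le> L" unfolding L_def by simp
  have "\<bar>p k y u - p k y' u\<bar> \<le> L * norm (y - y')" if u: "u \<in> Vset" for k u y y'
  proof -
    have "norm ((\<lambda>z. p k z u) y - (\<lambda>z. p k z u) y') \<le> L * norm (y - y')"
    proof (rule differentiable_bound[where S=UNIV and f'="\<lambda>z. blinfun_apply (Dp k u z)"])
      fix x :: "real^'d"
      show "((\<lambda>z. p k z u) has_derivative blinfun_apply (Dp k u x)) (at x within UNIV)"
        using p_D1[OF u] by simp
      show "onorm (blinfun_apply (Dp k u x)) \<le> L"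
        using BL[OF u, of k x] by (simp add: norm_blinfun.rep_eq[symmetric])
    qed auto
    then show ?thesis by simp
  qed
  then show ?thesis using L0' by blast
qed

lemma g_lip: "\<exists>Lg\<ge>0. \<forall>k y y'. norm (gdrift p k y - gdrift p k y') \<le> Lg * norm (y - y')"
proof -
  obtain L where L0: "L \<ge> 0" and L: "\<And>k u y y'. u \<in> Vset \<Longrightarrow> \<bar>p k y u - p k y' u\<bar> \<le> L * norm (y - y')"
    using p_lip by blast
  have "norm (gdrift p k y - gdrift p k y') \<le> (real (card (Vset :: (real^'d) set)) * L) * norm (y - y')" for k y y'
  proof -
    have "gdrift p k y - gdrift p k y' = (\<Sum>u\<in>Vset. (p k y u - p k y' u) *\<^sub>R u)"
      unfolding gdrift_def by (simp add: sum_subtractf scaleR_diff_left)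
    also have "norm \<dots> \<le> (\<Sum>u\<in>Vset. norm ((p k y u - p k y' u) *\<^sub>R u))" by (rule norm_sum)
    also have "\<dots> \<le> (\<Sum>u\<in>(Vset :: (real^'d) set). L * norm (y - y'))"
      by (rule sum_mono) (simp add: norm_Vset L)
    finally show ?thesis by simp
  qed
  then show ?thesis using L0 by (intro exI[of _ "real (card (Vset :: (real^'d) set)) * L"]) auto
qed

lemma vec_decay:
  "\<exists>K \<sigma>. 0 \<le> K \<and> 0 \<le> \<sigma> \<and> \<sigma> < 1 \<and>
     (\<forall>(H :: 'e \<Rightarrow> real^'d) B n i. (\<Sum>k\<in>UNIV. \<mu> k *\<^sub>R H k) = 0 \<longrightarrow> (\<forall>j. norm (H j) \<le> B) \<longrightarrow>
        norm (\<Sum>j\<in>UNIV. mpow P n i j *\<^sub>R H j) \<le> K * \<sigma> ^ n * B)"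
proof -
  obtain K \<sigma> where K: "0 \<le> K" "0 \<le> \<sigma>" "\<sigma> < 1" and
    dec: "\<And>f B n i. (\<Sum>j\<in>UNIV. \<mu> j * f j) = 0 \<Longrightarrow> (\<forall>j. \<bar>f j\<bar> \<le> B) \<Longrightarrow>
        \<bar>app (mpow P n) f i\<bar> \<le> K * \<sigma> ^ n * B"
    using geometric_decay[OF P_stoch P_irr P_aper mu_inv] by blast
  have "norm (\<Sum>j\<in>UNIV. mpow P n i j *\<^sub>R H j) \<le> (real CARD('d) * K) * \<sigma> ^ n * B"
    if H0: "(\<Sum>k\<in>UNIV. \<mu> k *\<^sub>R H k) = 0" and HB: "\<forall>j. norm (H j) \<le> B"
    for H :: "'e \<Rightarrow> real^'d" and B n i
  proof -
    have comp: "\<bar>(\<Sum>j\<in>UNIV. mpow P n i j *\<^sub>R H j) $ c\<bar> \<le> K * \<sigma> ^ n * B" for c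
    proof -
      have "(\<Sum>j\<in>UNIV. mpow P n i j *\<^sub>R H j) $ c = app (mpow P n) (\<lambda>j. H j $ c) i"
        by (simp add: app_def)
      moreover have "(\<Sum>j\<in>UNIV. \<mu> j * H j $ c) = 0"
        using arg_cong[OF H0, of "\<lambda>v. v $ c"] by simp
      moreover have "\<forall>j. \<bar>H j $ c\<bar> \<le> B"
        using HB component_le_norm_cart order.trans by blast
      ultimately show ?thesis using dec by simp
    qed
    have "norm (\<Sum>j\<in>UNIV. mpow P n i j *\<^sub>R H j) \<le> (\<Sum>c\<in>UNIV. \<bar>(\<Sum>j\<in>UNIV. mpow P n i j *\<^sub>R H j) $ c\<bar>)"
      by (rule norm_le_l1_cart)
    also have "\<dots> \<le> (\<Sum>c\<in>(UNIV::'d set). K * \<sigma> ^ n * B)" by (rule sum_mono) (rule comp)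
    finally show ?thesis by simp
  qed
  then show ?thesis using K by (intro exI[of _ "real CARD('d) * K"] exI[of _ \<sigma>]) auto
qed

lemma vcorr_facts:
  "\<exists>Vb Lv. 0 \<le> Vb \<and> 0 \<le> Lv \<and>
     (\<forall>i y. summable (\<lambda>n. \<Sum>j\<in>UNIV. mpow P n i j *\<^sub>R gdrift p j y)) \<and>
     (\<forall>i y. norm (vcorr P p i y) \<le> Vb) \<and>
     (\<forall>i y y'. norm (vcorr P p i y - vcorr P p i y') \<le> Lv * norm (y - y'))"
proof -
  obtain K \<sigma> where K: "0 \<le> K" "0 \<le> \<sigma>" "\<sigma> < 1" and
    dec: "\<And>(H :: 'e \<Rightarrow> real^'d) B n i. (\<Sum>k\<in>UNIV. \<mu> k *\<^sub>R H k) = 0 \<Longrightarrow> (\<forall>j. norm (H j) \<le> B) \<Longrightarrow>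
        norm (\<Sum>j\<in>UNIV. mpow P n i j *\<^sub>R H j) \<le> K * \<sigma> ^ n * B"
    using vec_decay by blast
  obtain Lg where Lg: "Lg \<ge> 0" "\<And>k y y'. norm (gdrift p k y - gdrift p k y') \<le> Lg * norm (y - y')"
    using g_lip by blast
  define T where "T y i n = (\<Sum>j\<in>UNIV. mpow P n i j *\<^sub>R gdrift p j y)" for y i n
  have Tb: "norm (T y i n) \<le> K * \<sigma> ^ n" for y i n
    using dec[of "\<lambda>j. gdrift p j y" 1 n i] centered gdrift_bound unfolding T_def by simp
  have TS: "summable (T y i)" "norm (suminf (T y i)) \<le> K / (1 - \<sigma>)" for y i
    using norm_suminf_geo[of "T y i" K \<sigma>] Tb K by auto
  have vT: "vcorr P p i y = suminf (T y i)" for i y unfolding vcorr_def T_def ..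
  have lip: "norm (vcorr P p i y - vcorr P p i y') \<le> (Lg * norm (y - y') * K) / (1 - \<sigma>)" for i y y'
  proof -
    have e: "vcorr P p i y - vcorr P p i y' = (\<Sum>n. T y i n - T y' i n)"
      unfolding vT by (rule suminf_diff[OF TS(1) TS(1)])
    have tb: "norm (T y i n - T y' i n) \<le> (Lg * norm (y - y') * K) * \<sigma> ^ n" for n
    proof -
      have "T y i n - T y' i n = (\<Sum>j\<in>UNIV. mpow P n i j *\<^sub>R (gdrift p j y - gdrift p j y'))"
        unfolding T_def by (simp add: sum_subtractf scaleR_diff_right)
      also have "norm \<dots> \<le> K * \<sigma> ^ n * (Lg * norm (y - y'))"
      proof (rule dec)
        show "(\<Sum>k\<in>UNIV. \<mu> k *\<^sub>R (gdrift p k y - gdrift p k y')) = 0"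
          using centered[of y] centered[of y'] by (simp add: sum_subtractf scaleR_diff_right)
      qed (use Lg in auto)
      finally show ?thesis by (simp add: ac_simps)
    qed
    show ?thesis unfolding e
      by (rule norm_suminf_geo(3)[where c="Lg * norm (y - y') * K", OF tb K(2,3)])
  qed
  have nn1: "0 \<le> K / (1 - \<sigma>)" using K by simp
  have nn2: "0 \<le> Lg * K / (1 - \<sigma>)" using K Lg by simp
  have sm: "\<forall>i y. summable (\<lambda>n. \<Sum>j\<in>UNIV. mpow P n i j *\<^sub>R gdrift p j y)"
    using TS(1) unfolding T_def by blast
  have bd: "\<forall>i y. norm (vcorr P p i y) \<le> K / (1 - \<sigma>)" using TS(2) vT by simp
  have lp: "\<forall>i y y'. norm (vcorr P p i y - vcorr P p i y') \<le> (Lg * K / (1 - \<sigma>)) * norm (y - y')"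
  proof (intro allI)
    fix i and y y' :: "real^'d"
    have "(Lg * norm (y - y') * K) / (1 - \<sigma>) = (Lg * K / (1 - \<sigma>)) * norm (y - y')" by simp
    then show "norm (vcorr P p i y - vcorr P p i y') \<le> (Lg * K / (1 - \<sigma>)) * norm (y - y')"
      using lip[of i y y'] by (simp only:)
  qed
  show ?thesis using nn1 nn2 sm bd lp by blast
qed

lemma poisson:
  "(\<Sum>k\<in>UNIV. P i k *\<^sub>R vcorr P p k z) = vcorr P p i z - gdrift p i z"
proof -
  obtain Vb Lv where summ: "\<And>i y. summable (\<lambda>n. \<Sum>j\<in>UNIV. mpow P n i j *\<^sub>R gdrift p j y)"
    using vcorr_facts by blast
  define T where "T i n = (\<Sum>j\<in>UNIV. mpow P n i j *\<^sub>R gdrift p j z)" for i n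
  have sT: "summable (T i)" for i unfolding T_def by (rule summ)
  have vT: "vcorr P p i z = suminf (T i)" for i unfolding vcorr_def T_def ..
  have TSuc: "T i (Suc n) = (\<Sum>k\<in>UNIV. P i k *\<^sub>R T k n)" for n
  proof -
    have "T i (Suc n) = (\<Sum>j\<in>UNIV. \<Sum>k\<in>UNIV. (P i k * mpow P n k j) *\<^sub>R gdrift p j z)"
      unfolding T_def mpow_Suc_left by (simp add: scaleR_sum_left)
    also have "\<dots> = (\<Sum>k\<in>UNIV. \<Sum>j\<in>UNIV. (P i k * mpow P n k j) *\<^sub>R gdrift p j z)"
      by (rule sum.swap)
    also have "\<dots> = (\<Sum>k\<in>UNIV. P i k *\<^sub>R T k n)"
      unfolding T_def by (simp add: scaleR_sum_right)
    finally show ?thesis .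
  qed
  have "(\<Sum>k\<in>UNIV. P i k *\<^sub>R vcorr P p k z) = (\<Sum>k\<in>UNIV. \<Sum>n. P i k *\<^sub>R T k n)"
    unfolding vT by (simp add: suminf_scaleR_right[OF sT])
  also have "\<dots> = (\<Sum>n. \<Sum>k\<in>UNIV. P i k *\<^sub>R T k n)"
    by (rule suminf_sum[symmetric]) (rule summable_scaleR_right[OF sT])
  also have "\<dots> = (\<Sum>n. T i (Suc n))" by (simp add: TSuc)
  also have "\<dots> = suminf (T i) - T i 0" by (rule suminf_split_head[OF sT])
  also have "T i 0 = gdrift p i z" unfolding T_def
    by (simp add: if_distrib[of "\<lambda>x. x *\<^sub>R _"] cong: if_cong)
  finally show ?thesis unfolding vT .
qed

lemma identity:
  "(\<Sum>k\<in>UNIV. \<Sum>u\<in>Vset. (P i k * p i y u) *\<^sub>R (u + vcorr P p k (y + u /\<^sub>R real m)))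
     = vcorr P p i y + bdrift P p m i y"
proof -
  define h where "h w = vcorr P p i w - gdrift p i w" for w
  have Prs: "(\<Sum>k\<in>UNIV. P i k) = 1" using P_stoch by (simp add: stochastic_def)
  have "(\<Sum>k\<in>UNIV. \<Sum>u\<in>Vset. (P i k * p i y u) *\<^sub>R (u + vcorr P p k (y + u /\<^sub>R real m)))
      = (\<Sum>u\<in>Vset. \<Sum>k\<in>UNIV. (P i k * p i y u) *\<^sub>R (u + vcorr P p k (y + u /\<^sub>R real m)))"
    by (rule sum.swap)
  also have "\<dots> = (\<Sum>u\<in>Vset. p i y u *\<^sub>R (\<Sum>k\<in>UNIV. P i k *\<^sub>R (u + vcorr P p k (y + u /\<^sub>R real m))))"
    by (simp add: scaleR_sum_right mult.commute)
  also have "\<dots> = (\<Sum>u\<in>Vset. p i y u *\<^sub>R (u + h (y + u /\<^sub>R real m)))"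
  proof (rule sum.cong[OF refl])
    fix u :: "real^'d"
    have "(\<Sum>k\<in>UNIV. P i k *\<^sub>R (u + vcorr P p k (y + u /\<^sub>R real m)))
        = (\<Sum>k\<in>UNIV. P i k) *\<^sub>R u + (\<Sum>k\<in>UNIV. P i k *\<^sub>R vcorr P p k (y + u /\<^sub>R real m))"
      by (simp add: scaleR_add_right sum.distrib scaleR_sum_left)
    also have "\<dots> = u + h (y + u /\<^sub>R real m)" unfolding Prs poisson h_def by simp
    finally show "p i y u *\<^sub>R (\<Sum>k\<in>UNIV. P i k *\<^sub>R (u + vcorr P p k (y + u /\<^sub>R real m)))
        = p i y u *\<^sub>R (u + h (y + u /\<^sub>R real m))" by simp
  qed
  also have "\<dots> = gdrift p i y + (\<Sum>u\<in>Vset. p i y u *\<^sub>R h (y + u /\<^sub>R real m))"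
    unfolding gdrift_def by (simp add: scaleR_add_right sum.distrib)
  also have "\<dots> = vcorr P p i y + bdrift P p m i y"
  proof -
    have "bdrift P p m i y = (\<Sum>u\<in>Vset. p i y u *\<^sub>R h (y + u /\<^sub>R real m)) - (\<Sum>u\<in>Vset. p i y u) *\<^sub>R h y"
      unfolding bdrift_def h_def[symmetric] by (simp add: scaleR_diff_right sum_subtractf scaleR_sum_left)
    then show ?thesis unfolding p_sum h_def by simp
  qed
  finally show ?thesis .
qed

lemma bdrift_bound:
  "\<exists>C. \<forall>m'::nat. 1 \<le> m' \<longrightarrow> (\<forall>i y. norm (bdrift P p m' i y) \<le> C / real m')"
proof -
  obtain Vb Lv where Lv: "0 \<le> Lv" "\<And>i y y'. norm (vcorr P p i y - vcorr P p i y') \<le> Lv * norm (y - y')"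
    using vcorr_facts by blast
  obtain Lg where Lg: "Lg \<ge> 0" "\<And>k y y'. norm (gdrift p k y - gdrift p k y') \<le> Lg * norm (y - y')"
    using g_lip by blast
  have "norm (bdrift P p m' i y) \<le> (Lv + Lg) / real m'" if m': "1 \<le> m'" for m' i y
  proof -
    define h where "h w = vcorr P p i w - gdrift p i w" for w
    have hl: "norm (h a - h b) \<le> (Lv + Lg) * norm (a - b)" for a b
    proof -
      have "h a - h b = (vcorr P p i a - vcorr P p i b) - (gdrift p i a - gdrift p i b)"
        unfolding h_def by simp
      also have "norm \<dots> \<le> norm (vcorr P p i a - vcorr P p i b) + norm (gdrift p i a - gdrift p i b)"
        by (rule norm_triangle_ineq4)
      also have "\<dots> \<le> Lv * norm (a - b) + Lg * norm (a - b)" using Lv(2) Lg(2) by (intro add_mono)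
      finally show ?thesis by (simp add: algebra_simps)
    qed
    have "norm (bdrift P p m' i y) \<le> (\<Sum>u\<in>Vset. norm (p i y u *\<^sub>R (h (y + u /\<^sub>R real m') - h y)))"
      unfolding bdrift_def h_def[symmetric] by (rule norm_sum)
    also have "\<dots> \<le> (\<Sum>u\<in>Vset. p i y u * ((Lv + Lg) / real m'))"
    proof (rule sum_mono)
      fix u :: "real^'d" assume u: "u \<in> Vset"
      have "norm (h (y + u /\<^sub>R real m') - h y) \<le> (Lv + Lg) * norm (u /\<^sub>R real m')"
        using hl[of "y + u /\<^sub>R real m'" y] by simp
      also have "\<dots> = (Lv + Lg) / real m'" using norm_Vset[OF u] m' by (simp add: field_simps)
      finally have hb: "norm (h (y + u /\<^sub>R real m') - h y) \<le> (Lv + Lg) / real m'" .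
      have "p i y u * norm (h (y + u /\<^sub>R real m') - h y) \<le> p i y u * ((Lv + Lg) / real m')"
        by (rule mult_left_mono[OF hb p_nonneg[OF u]])
      then show "norm (p i y u *\<^sub>R (h (y + u /\<^sub>R real m') - h y)) \<le> p i y u * ((Lv + Lg) / real m')"
        using p_nonneg[OF u] by simp
    qed
    also have "\<dots> = (\<Sum>u\<in>Vset. p i y u) * ((Lv + Lg) / real m')" by (rule sum_distrib_right[symmetric])
    also have "\<dots> = (Lv + Lg) / real m'" by (simp only: p_sum mult_1)
    finally show ?thesis .
  qed
  then show ?thesis by blast
qed

end


theorem proposition4p2:
  fixes P :: "'e::finite \<Rightarrow> 'e \<Rightarrow> real"
    and \<mu> :: "'e \<Rightarrow> real"
    and p :: "'e \<Rightarrow> real ^ 'd \<Rightarrow> real ^ 'd \<Rightarrow> real"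
    and Dp :: "'e \<Rightarrow> real ^ 'd \<Rightarrow> real ^ 'd \<Rightarrow> ((real ^ 'd) \<Rightarrow>\<^sub>L real)"
    and D2p :: "'e \<Rightarrow> real ^ 'd \<Rightarrow> real ^ 'd \<Rightarrow> ((real ^ 'd) \<Rightarrow>\<^sub>L ((real ^ 'd) \<Rightarrow>\<^sub>L real))"
    and M :: "'a measure"
    and \<xi> :: "nat \<Rightarrow> 'a \<Rightarrow> 'e"
    and J :: "nat \<Rightarrow> 'a \<Rightarrow> real ^ 'd"
    and m :: nat
  assumes P_stoch: "stochastic P"
    and P_irr: "irreducible_mat P"
    and P_aper: "aperiodic_mat P"
    and mu_inv: "invariant_prob P \<mu>"
    and p_nonneg: "\<And>k y u. u \<in> Vset \<Longrightarrow> 0 \<le> p k y u"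
    and p_sum: "\<And>k y. (\<Sum>u\<in>Vset. p k y u) = 1"
    and p_D1: "\<And>k u y. u \<in> Vset \<Longrightarrow>
                 ((\<lambda>z. p k z u) has_derivative blinfun_apply (Dp k u y)) (at y)"
    and p_D2: "\<And>k u y. u \<in> Vset \<Longrightarrow>
                 (Dp k u has_derivative blinfun_apply (D2p k u y)) (at y)"
    and p_D2_cont: "\<And>k u. u \<in> Vset \<Longrightarrow> continuous_on UNIV (D2p k u)"
    and p_D1_bdd: "\<And>k u. u \<in> Vset \<Longrightarrow> bounded (range (Dp k u))"
    and p_D2_bdd: "\<And>k u. u \<in> Vset \<Longrightarrow> bounded (range (D2p k u))"
    and centered: "\<And>y. (\<Sum>k\<in>UNIV. \<mu> k *\<^sub>R gdrift p k y) = 0"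
    and m_pos: "1 \<le> m"
    and M_prob: "prob_space M"
    and xi_meas: "\<And>n. \<xi> n \<in> measurable M (count_space UNIV)"
    and J_meas: "\<And>n. J n \<in> borel_measurable M"
    and J_steps: "\<And>n x. x \<in> space M \<Longrightarrow> 1 \<le> n \<Longrightarrow> J n x \<in> Vset"
    and transition: "\<And>n k u. u \<in> Vset \<Longrightarrow>
        AE x in M. real_cond_exp M (filt M \<xi> J n)
            (indicator {x \<in> space M. \<xi> (Suc n) x = k \<and> J (Suc n) x = u}) x
          = P (\<xi> n x) k * p (\<xi> n x) (Spos J n x /\<^sub>R real m) u"
  shows "(\<forall>n. AE x in M.
            Spos J (Suc n) x + vcorr P p (\<xi> (Suc n) x) (Spos J (Suc n) x /\<^sub>R real m)
          = Spos J n x + vcorr P p (\<xi> n x) (Spos J n x /\<^sub>R real m)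
            + bdrift P p m (\<xi> n x) (Spos J n x /\<^sub>R real m)
            + ((J (Suc n) x + vcorr P p (\<xi> (Suc n) x) (Spos J (Suc n) x /\<^sub>R real m))
               - cond_exp_vec M (filt M \<xi> J n)
                   (\<lambda>z. J (Suc n) z + vcorr P p (\<xi> (Suc n) z) (Spos J (Suc n) z /\<^sub>R real m)) x))
       \<and> (\<exists>C. \<forall>m'::nat. 1 \<le> m' \<longrightarrow> (\<forall>i y. norm (bdrift P p m' i y) \<le> C / real m'))"
proof
  note ctx = P_stoch P_irr P_aper mu_inv p_nonneg p_sum p_D1 p_D1_bdd centered
  show "\<exists>C. \<forall>m'::nat. 1 \<le> m' \<longrightarrow> (\<forall>i y. norm (bdrift P p m' i y) \<le> C / real m')"
    by (rule bdrift_bound[where P=P and \<mu>=\<mu> and p=p and Dp=Dp, OF ctx])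
  obtain Vb Lv where Vb: "0 \<le> Vb" "0 \<le> Lv" "\<And>i y. norm (vcorr P p i y) \<le> Vb"
    and Lv: "\<And>i y y'. norm (vcorr P p i y - vcorr P p i y') \<le> Lv * norm (y - y')"
    using vcorr_facts[where P=P and \<mu>=\<mu> and p=p and Dp=Dp, OF ctx] by blast
  have iden: "\<And>m i y. (\<Sum>k\<in>UNIV. \<Sum>u\<in>Vset. (P i k * p i y u) *\<^sub>R (u + vcorr P p k (y + u /\<^sub>R real m)))
     = vcorr P p i y + bdrift P p m i y"
    by (rule identity[where P=P and \<mu>=\<mu> and p=p and Dp=Dp, OF ctx])
  have vcont: "continuous_on UNIV (vcorr P p k)" for k
  proof -
    have "Lv-lipschitz_on UNIV (vcorr P p k)"
      by (rule lipschitz_onI) (use Lv Vb in \<open>auto simp: dist_norm\<close>)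
    then show ?thesis by (rule lipschitz_on_continuous_on)
  qed
  interpret prob_space M by (rule M_prob)
  show "\<forall>n. AE x in M.
            Spos J (Suc n) x + vcorr P p (\<xi> (Suc n) x) (Spos J (Suc n) x /\<^sub>R real m)
          = Spos J n x + vcorr P p (\<xi> n x) (Spos J n x /\<^sub>R real m)
            + bdrift P p m (\<xi> n x) (Spos J n x /\<^sub>R real m)
            + ((J (Suc n) x + vcorr P p (\<xi> (Suc n) x) (Spos J (Suc n) x /\<^sub>R real m))
               - cond_exp_vec M (filt M \<xi> J n)
                   (\<lambda>z. J (Suc n) z + vcorr P p (\<xi> (Suc n) z) (Spos J (Suc n) z /\<^sub>R real m)) x)"
  proof
    fix n
    define F where "F = filt M \<xi> J n"
    define G where "G = (\<Union>k\<in>{..n}. {\<xi> k -` B \<inter> space M | B. True} \<union> {J k -` B \<inter> space M | B. B \<in> sets borel})"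
    have GM: "G \<subseteq> sets M"
    proof
      fix A assume "A \<in> G"
      then have "(\<exists>k B. A = \<xi> k -` B \<inter> space M) \<or> (\<exists>k B. A = J k -` B \<inter> space M \<and> B \<in> sets borel)"
        unfolding G_def by blast
      then show "A \<in> sets M"
      proof (elim disjE exE conjE)
        fix k and B :: "'e set"
        assume "A = \<xi> k -` B \<inter> space M"
        then show ?thesis using measurable_sets[OF xi_meas, of B k] by simp
      next
        fix k and B :: "(real^'d) set"
        assume "A = J k -` B \<inter> space M" "B \<in> sets borel"
        then show ?thesis using measurable_sets[OF J_meas, of B k] by simp
      qed
    qed
    have GP: "G \<subseteq> Pow (space M)" unfolding G_def by auto
    have FG: "F = sigma (space M) G" unfolding F_def filt_def G_def ..
    have spF: "space F = space M" unfolding FG by (rule space_measure_of_conv)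
    have setsF: "sets F = sigma_sets (space M) G" unfolding FG by (rule sets_measure_of[OF GP])
    have subalg: "subalgebra M F"
      unfolding subalgebra_def using spF setsF sets.sigma_sets_subset[OF GM] by auto
    interpret S: sigma_finite_subalgebra M F
      by (rule finite_measure_subalgebra_is_sigma_finite)
         (simp add: finite_measure_subalgebra_def finite_measure_subalgebra_axioms_def subalg finite_measure_axioms)
    have xiF: "\<xi> k \<in> measurable F (count_space UNIV)" if "k \<le> n" for k
    proof (rule measurableI)
      fix A :: "'e set"
      have "\<xi> k -` A \<inter> space M \<in> G" unfolding G_def using that by blast
      then show "\<xi> k -` A \<inter> space F \<in> sets F" unfolding spF setsF by (rule sigma_sets.Basic)
    qed simp
    have JF: "J k \<in> borel_measurable F" if "k \<le> n" for k
    proof (rule measurableI)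
      fix A :: "(real^'d) set" assume "A \<in> sets borel"
      then have "J k -` A \<inter> space M \<in> G" unfolding G_def using that by blast
      then show "J k -` A \<inter> space F \<in> sets F" unfolding spF setsF by (rule sigma_sets.Basic)
    qed simp
    have SF: "Spos J k \<in> borel_measurable F" if "k \<le> n" for k
      using that
    proof (induction k)
      case 0
      have "Spos J 0 = (\<lambda>x. 0)" by (rule ext) simp
      then show ?case by simp
    next
      case (Suc k)
      have "Spos J (Suc k) = (\<lambda>x. Spos J k x + J (Suc k) x)" by (rule ext) simp
      have "Spos J k \<in> borel_measurable F" using Suc by simp
      moreover have "J (Suc k) \<in> borel_measurable F" using Suc.prems by (intro JF)
      ultimately show ?case unfolding \<open>Spos J (Suc k) = _\<close> by (rule borel_measurable_add)
    qed
    define h where "h k u c z = (u + vcorr P p k (Spos J n z /\<^sub>R real m + u /\<^sub>R real m)) $ c"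
      for k :: 'e and u :: "real^'d" and c :: 'd and z
    define E where "E k u = {x \<in> space M. \<xi> (Suc n) x = k \<and> J (Suc n) x = u}" for k u
    have EM: "E k u \<in> sets M" for k u
    proof -
      have "E k u = (\<xi> (Suc n) -` {k} \<inter> space M) \<inter> (J (Suc n) -` {u} \<inter> space M)"
        unfolding E_def by auto
      moreover have "\<xi> (Suc n) -` {k} \<inter> space M \<in> sets M" by (rule measurable_sets[OF xi_meas]) simp
      moreover have "J (Suc n) -` {u} \<inter> space M \<in> sets M" by (rule measurable_sets[OF J_meas]) simp
      ultimately show ?thesis by auto
    qed
    have hF: "h k u c \<in> borel_measurable F" for k u c
    proof -
      have "continuous_on UNIV (\<lambda>w. vcorr P p k (w /\<^sub>R real m + u /\<^sub>R real m))"
        by (rule continuous_on_compose2[OF vcont[of k]]) (auto intro!: continuous_intros)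
      then have "continuous_on UNIV (\<lambda>w. (u + vcorr P p k (w /\<^sub>R real m + u /\<^sub>R real m)) $ c)"
        by (intro continuous_intros)
      then have "(\<lambda>w. (u + vcorr P p k (w /\<^sub>R real m + u /\<^sub>R real m)) $ c) \<in> borel_measurable borel"
        by (rule borel_measurable_continuous_onI)
      from measurable_compose[OF SF[of n] this] show ?thesis unfolding h_def[abs_def] by simp
    qed
    have hM: "h k u c \<in> borel_measurable M" for k u c by (rule measurable_from_subalg[OF subalg hF])
    have hb: "\<bar>h k u c z\<bar> \<le> norm u + Vb" for k u c z
    proof -
      have "\<bar>h k u c z\<bar> \<le> norm (u + vcorr P p k (Spos J n z /\<^sub>R real m + u /\<^sub>R real m))"
        unfolding h_def by (rule component_le_norm_cart)
      also have "\<dots> \<le> norm u + norm (vcorr P p k (Spos J n z /\<^sub>R real m + u /\<^sub>R real m))"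
        by (rule norm_triangle_ineq)
      also have "\<dots> \<le> norm u + Vb" using Vb(3) by simp
      finally show ?thesis .
    qed
    have indM: "indicator (E k u) \<in> borel_measurable M" for k u
      by (rule borel_measurable_indicator[OF EM])
    have intg: "integrable M (\<lambda>z. h k u c z * indicator (E k u) z)" for k u c
    proof (rule integrable_const_bound[where B="norm u + Vb"])
      show "AE x in M. norm (h k u c x * indicator (E k u) x) \<le> norm u + Vb"
        using hb[of k u c] Vb(1) by (auto simp: indicator_def)
      show "(\<lambda>z. h k u c z * indicator (E k u) z) \<in> borel_measurable M"
        using hM indM by (intro borel_measurable_times) auto
    qed
    define Z where "Z = (\<lambda>z. J (Suc n) z + vcorr P p (\<xi> (Suc n) z) (Spos J (Suc n) z /\<^sub>R real m))"
    define W where "W c z = (\<Sum>ku\<in>UNIV \<times> Vset. h (fst ku) (snd ku) c z * indicator (E (fst ku) (snd ku)) z)"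
      for c z
    have ZW: "Z z $ c = W c z" if z: "z \<in> space M" for z c
    proof -
      have Jz: "J (Suc n) z \<in> Vset" using J_steps[OF z] by simp
      have "W c z = (\<Sum>ku\<in>UNIV \<times> Vset. if (\<xi> (Suc n) z, J (Suc n) z) = ku then h (fst ku) (snd ku) c z else 0)"
        unfolding W_def by (rule sum.cong[OF refl]) (auto simp: E_def indicator_def z)
      also have "\<dots> = h (\<xi> (Suc n) z) (J (Suc n) z) c z"
        by (subst sum.delta') (auto simp: Jz finite_Vset)
      also have "\<dots> = Z z $ c"
        unfolding h_def Z_def by (simp add: scaleR_add_right)
      finally show ?thesis by simp
    qed
    have WM: "W c \<in> borel_measurable M" for c
      unfolding W_def using hM indM by (intro borel_measurable_sum borel_measurable_times) auto
    have ZM: "(\<lambda>z. Z z $ c) \<in> borel_measurable M" for c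
    proof -
      have "(\<lambda>z. Z z $ c) \<in> borel_measurable M \<longleftrightarrow> W c \<in> borel_measurable M"
        by (rule measurable_cong) (rule ZW)
      then show ?thesis using WM by simp
    qed
    have comp: "AE x in M. real_cond_exp M F (\<lambda>z. Z z $ c) x
        = (vcorr P p (\<xi> n x) (Spos J n x /\<^sub>R real m) + bdrift P p m (\<xi> n x) (Spos J n x /\<^sub>R real m)) $ c"
      for c
    proof -
      have a1: "AE x in M. real_cond_exp M F (\<lambda>z. Z z $ c) x = real_cond_exp M F (W c) x"
      proof (rule S.real_cond_exp_cong)
        show "AE x in M. Z x $ c = W c x" by (rule AE_I2) (rule ZW)
      qed (rule ZM, rule WM)
      have a2: "AE x in M. real_cond_exp M F (W c) x
          = (\<Sum>ku\<in>UNIV \<times> Vset. real_cond_exp M F (\<lambda>z. h (fst ku) (snd ku) c z * indicator (E (fst ku) (snd ku)) z) x)"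
        unfolding W_def[abs_def] by (rule S.real_cond_exp_sum) (rule intg)
      have a3: "AE x in M. \<forall>ku\<in>UNIV \<times> Vset.
          real_cond_exp M F (\<lambda>z. h (fst ku) (snd ku) c z * indicator (E (fst ku) (snd ku)) z) x
          = h (fst ku) (snd ku) c x * real_cond_exp M F (indicator (E (fst ku) (snd ku))) x"
      proof (rule AE_finite_allI)
        show "finite ((UNIV :: 'e set) \<times> (Vset :: (real^'d) set))" by (simp add: finite_Vset)
        fix ku :: "'e \<times> (real^'d)"
        show "AE x in M. real_cond_exp M F (\<lambda>z. h (fst ku) (snd ku) c z * indicator (E (fst ku) (snd ku)) z) x
          = h (fst ku) (snd ku) c x * real_cond_exp M F (indicator (E (fst ku) (snd ku))) x"
          by (rule S.real_cond_exp_mult[OF hF indM intg])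
      qed
      have a4: "AE x in M. \<forall>ku\<in>UNIV \<times> Vset.
          real_cond_exp M F (indicator (E (fst ku) (snd ku))) x
          = P (\<xi> n x) (fst ku) * p (\<xi> n x) (Spos J n x /\<^sub>R real m) (snd ku)"
      proof (rule AE_finite_allI)
        show "finite ((UNIV :: 'e set) \<times> (Vset :: (real^'d) set))" by (simp add: finite_Vset)
        fix ku :: "'e \<times> (real^'d)" assume "ku \<in> UNIV \<times> Vset"
        then have "snd ku \<in> Vset" by auto
        from transition[of "snd ku" n "fst ku", OF this]
        show "AE x in M. real_cond_exp M F (indicator (E (fst ku) (snd ku))) x
          = P (\<xi> n x) (fst ku) * p (\<xi> n x) (Spos J n x /\<^sub>R real m) (snd ku)"
          unfolding E_def F_def .
      qed
      show ?thesis
        using a1 a2 a3 a4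
      proof eventually_elim
        case (elim x)
        let ?i = "\<xi> n x" and ?y = "Spos J n x /\<^sub>R real m"
        have "real_cond_exp M F (\<lambda>z. Z z $ c) x
            = (\<Sum>ku\<in>UNIV \<times> Vset. real_cond_exp M F (\<lambda>z. h (fst ku) (snd ku) c z * indicator (E (fst ku) (snd ku)) z) x)"
          using elim(1,2) by (rule trans)
        also have "\<dots> = (\<Sum>ku\<in>UNIV \<times> Vset. h (fst ku) (snd ku) c x * (P ?i (fst ku) * p ?i ?y (snd ku)))"
        proof (rule sum.cong[OF refl])
          fix ku assume ku: "ku \<in> (UNIV :: 'e set) \<times> (Vset :: (real^'d) set)"
          from bspec[OF elim(3) ku] bspec[OF elim(4) ku]
          show "real_cond_exp M F (\<lambda>z. h (fst ku) (snd ku) c z * indicator (E (fst ku) (snd ku)) z) x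
            = h (fst ku) (snd ku) c x * (P ?i (fst ku) * p ?i ?y (snd ku))" by simp
        qed
        also have "\<dots> = (\<Sum>k\<in>UNIV. \<Sum>u\<in>Vset. (P ?i k * p ?i ?y u) *\<^sub>R (u + vcorr P p k (?y + u /\<^sub>R real m))) $ c"
          unfolding h_def by (simp add: sum.cartesian_product split_def mult.commute)
        also have "\<dots> = (vcorr P p ?i ?y + bdrift P p m ?i ?y) $ c" by (simp only: iden)
        finally show ?case .
      qed
    qed
    have "AE x in M. \<forall>c\<in>UNIV. real_cond_exp M F (\<lambda>z. Z z $ c) x
        = (vcorr P p (\<xi> n x) (Spos J n x /\<^sub>R real m) + bdrift P p m (\<xi> n x) (Spos J n x /\<^sub>R real m)) $ c"
    proof (rule AE_finite_allI)
      fix c :: 'd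
      show "AE x in M. real_cond_exp M F (\<lambda>z. Z z $ c) x
        = (vcorr P p (\<xi> n x) (Spos J n x /\<^sub>R real m) + bdrift P p m (\<xi> n x) (Spos J n x /\<^sub>R real m)) $ c"
        by (rule comp)
    qed simp
    then show "AE x in M.
            Spos J (Suc n) x + vcorr P p (\<xi> (Suc n) x) (Spos J (Suc n) x /\<^sub>R real m)
          = Spos J n x + vcorr P p (\<xi> n x) (Spos J n x /\<^sub>R real m)
            + bdrift P p m (\<xi> n x) (Spos J n x /\<^sub>R real m)
            + ((J (Suc n) x + vcorr P p (\<xi> (Suc n) x) (Spos J (Suc n) x /\<^sub>R real m))
               - cond_exp_vec M (filt M \<xi> J n)
                   (\<lambda>z. J (Suc n) z + vcorr P p (\<xi> (Suc n) z) (Spos J (Suc n) z /\<^sub>R real m)) x)"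
    proof eventually_elim
      case (elim x)
      have ce: "cond_exp_vec M (filt M \<xi> J n) Z x
          = vcorr P p (\<xi> n x) (Spos J n x /\<^sub>R real m) + bdrift P p m (\<xi> n x) (Spos J n x /\<^sub>R real m)"
        using elim unfolding cond_exp_vec_def F_def[symmetric] by (simp add: vec_eq_iff)
      show ?case using ce unfolding Z_def by (simp add: algebra_simps)
    qed
  qed
qed


end
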